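(* Let $G=(V,E)$ be a minimally $d$-rigid graph and $v_1,\dots,v_d$ a sequence of $d$ vertices of $G$. Suppose $(G,p_1),\dots,(G,p_t)$ are infinitesimally rigid real frameworks in $\mathbb{R}^d$ that are pairwise equivalent but pairwise non-congruent, and that $p_i(v_1),\dots,p_i(v_d)$ are affinely independent for every $1\le i\le t$. Then $r_d(G)\ge t$.
   Context: On $\mathbb{R}^d$, $\|\cdot\|$ is the Euclidean norm. Realisations $p,q:V\to\mathbb{R}^d$ are equivalent if $\|p(v)-p(w)\|=\|q(v)-q(w)\|$ for all edges $vw$, and congruent if related by an isometry of $\mathbb{R}^d$. A realisation is generic if its coordinates are algebraically independent over $\mathbb{Q}$. The rigidity matrix $R(G,p)$ is the $|E|\times d|V|$ matrix whose row for edge $uv$ has $p(u)-p(v)$ in the columns of $u$, $p(v)-p(u)$ in the columns of $v$, zeros elsewhere; $(G,p)$ is infinitesimally rigid if its rank is $d|V|-\binom{d+1}{2}$ (or $G=K_n$, $n\le d+1$, with affinely independent points). $G$ is $d$-rigid if some generic framework is rigid, minimally $d$-rigid if additionally $G-e$ is not $d$-rigid for every edge $e$. $r_d(G)$ is the maximum over generic $p:V\to\mathbb{R}^d$ of the number of congruence classes of real realisations equivalent to $p$. *)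

theory Defs
  imports "HOL-Analysis.Analysis" "HOL-Library.Extended_Nat"
begin

text \<open>The dimension d is CARD('n); points of R^d are of type real^'n.
A finite simple graph G=(V,E) has vertex set V = UNIV of a finite type 'v, and
edge set E, a set of 2-element vertex sets.\<close>

definition simple_graph :: "'v set set \<Rightarrow> bool" where
  "simple_graph E \<longleftrightarrow> (\<forall>e\<in>E. card e = 2)"

definition complete_graph :: "'v set set \<Rightarrow> bool" where
  "complete_graph E \<longleftrightarrow> E = {e. card e = 2}"

text \<open>Algebraic independence over Q of a finite family of reals: no nonzero
polynomial with rational coefficients (given by finitely many coefficients c alpha
of the monomials prod_i x_i^(alpha i)) vanishes at the family.\<close>
definition alg_indep_Q :: "('i::finite \<Rightarrow> real) \<Rightarrow> bool" where
  "alg_indep_Q x \<longleftrightarrow>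
     (\<forall>c :: ('i \<Rightarrow> nat) \<Rightarrow> rat. finite {\<alpha>. c \<alpha> \<noteq> 0} \<longrightarrow>
        (\<Sum>\<alpha>\<in>{\<alpha>. c \<alpha> \<noteq> 0}. of_rat (c \<alpha>) * (\<Prod>i\<in>UNIV. x i ^ \<alpha> i)) = 0 \<longrightarrow>
        (\<forall>\<alpha>. c \<alpha> = 0))"

definition generic :: "('v::finite \<Rightarrow> real^'n) \<Rightarrow> bool" where
  "generic p \<longleftrightarrow> alg_indep_Q (\<lambda>(v, j). p v $ j)"

definition aff_indep_points :: "('a \<Rightarrow> real^'n) \<Rightarrow> bool" where
  "aff_indep_points f \<longleftrightarrow> inj f \<and> \<not> affine_dependent (range f)"

definition rig_row :: "('v::finite \<Rightarrow> real^'n) \<Rightarrow> 'v \<Rightarrow> 'v \<Rightarrow> real^('v \<times> 'n)" where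
  "rig_row p u w = (\<chi> xj. if fst xj = u then (p u - p w) $ snd xj
                              else if fst xj = w then (p w - p u) $ snd xj else 0)"

definition rig_rank :: "'v set set \<Rightarrow> ('v::finite \<Rightarrow> real^'n) \<Rightarrow> nat" where
  "rig_rank E p = dim (span {rig_row p u w | u w. {u, w} \<in> E})"

definition inf_rigid :: "'v set set \<Rightarrow> ('v::finite \<Rightarrow> real^'n) \<Rightarrow> bool" where
  "inf_rigid E p \<longleftrightarrow>
     int (rig_rank E p) = int (CARD('n) * CARD('v)) - int ((CARD('n) + 1) choose 2)
     \<or> (complete_graph E \<and> CARD('v) \<le> CARD('n) + 1 \<and> aff_indep_points p)"

definition d_rigid :: "'v::finite set set \<Rightarrow> 'n::finite itself \<Rightarrow> bool" where
  "d_rigid E (_ :: 'n itself) \<longleftrightarrow>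
     (\<exists>p :: 'v \<Rightarrow> real^'n. generic p \<and> inf_rigid E p)"

definition min_d_rigid :: "'v::finite set set \<Rightarrow> 'n::finite itself \<Rightarrow> bool" where
  "min_d_rigid E d \<longleftrightarrow> d_rigid E d \<and> (\<forall>e\<in>E. \<not> d_rigid (E - {e}) d)"

definition equivalent :: "'v set set \<Rightarrow> ('v \<Rightarrow> real^'n) \<Rightarrow> ('v \<Rightarrow> real^'n) \<Rightarrow> bool" where
  "equivalent E p q \<longleftrightarrow>
     (\<forall>u w. {u, w} \<in> E \<longrightarrow> norm (p u - p w) = norm (q u - q w))"

definition congruent :: "('v \<Rightarrow> real^'n) \<Rightarrow> ('v \<Rightarrow> real^'n) \<Rightarrow> bool" where
  "congruent p q \<longleftrightarrow>
     (\<exists>f :: real^'n \<Rightarrow> real^'n. (\<forall>x y. dist (f x) (f y) = dist x y) \<and> (\<forall>v. q v = f (p v)))"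

definition num_classes :: "'v set set \<Rightarrow> ('v \<Rightarrow> real^'n) \<Rightarrow> enat" where
  "num_classes E p =
     (let C = {q. equivalent E p q} // {(q, q'). congruent q q'}
      in if finite C then enat (card C) else \<infinity>)"

definition r_d :: "'v::finite set set \<Rightarrow> 'n::finite itself \<Rightarrow> enat" where
  "r_d E (_ :: 'n itself) = (SUP p \<in> {p :: 'v \<Rightarrow> real^'n. generic p}. num_classes E p)"

end

theory Submission
  imports Defs
begin


lemma reflect_exists:
  fixes x y :: "'a::euclidean_space"
  assumes "norm x = norm y" and "\<forall>b\<in>B. inner x b = inner y b"
  shows "\<exists>h. orthogonal_transformation h \<and> h x = y \<and> (\<forall>b\<in>B. h b = b)"
proof (cases "x = y")
  case True
  then show ?thesis by (intro exI[of _ id]) (auto simp: orthogonal_transformation_def linear_id)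
next
  case False
  define n where "n = x - y"
  have nn: "inner n n \<noteq> 0" using False by (simp add: n_def)
  define h where "h z = z - (2 * inner z n / inner n n) *\<^sub>R n" for z
  have lin: "linear h" unfolding h_def
    by (intro linearI) (auto simp: inner_add_left inner_scaleR_left algebra_simps add_divide_distrib)
  have "norm (h z) ^ 2 = norm z ^ 2" for z
  proof -
    have "norm (h z) ^ 2 = inner (h z) (h z)" by (simp add: power2_norm_eq_inner)
    also have "\<dots> = inner z z - 2 * (2 * inner z n / inner n n) * inner z n
        + (2 * inner z n / inner n n)^2 * inner n n"
      unfolding h_def by (simp add: inner_diff_left inner_diff_right inner_commute power2_eq_square algebra_simps)
    also have "\<dots> = inner z z" using nn by (simp add: power2_eq_square field_simps)
    finally show ?thesis by (simp add: power2_norm_eq_inner)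
  qed
  then have nrm: "norm (h z) = norm z" for z
    by (metis norm_ge_zero power2_eq_imp_eq)
  have xx: "inner x x = inner y y" using assms(1) by (simp add: dot_square_norm)
  have xn: "inner n n = 2 * inner x n"
    using xx unfolding n_def by (simp add: inner_diff_left inner_diff_right inner_commute[of y x])
  have c1: "2 * inner x n / inner n n = 1" using nn xn by simp
  have hx: "h x = y" unfolding h_def c1 by (simp add: n_def)
  have hb: "h b = b" if "b \<in> B" for b
  proof -
    have "inner b n = 0" using assms(2) that by (simp add: n_def inner_diff_right inner_commute)
    then show ?thesis by (simp add: h_def)
  qed
  show ?thesis using lin nrm hx hb by (intro exI[of _ h]) (auto simp: orthogonal_transformation)
qed

lemma gram_iso:
  fixes a b :: "'v \<Rightarrow> 'a::euclidean_space"
  assumes "finite W" "\<forall>u\<in>W. \<forall>w\<in>W. inner (a u) (a w) = inner (b u) (b w)"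
  shows "\<exists>h. orthogonal_transformation h \<and> (\<forall>w\<in>W. h (a w) = b w)"
  using assms
proof (induction W rule: finite_induct)
  case empty
  then show ?case by (intro exI[of _ id]) (auto simp: orthogonal_transformation_def linear_id)
next
  case (insert u W)
  then obtain h where h: "orthogonal_transformation h" "\<forall>w\<in>W. h (a w) = b w" by auto
  have n: "norm (h (a u)) = norm (b u)"
    using insert.prems orthogonal_transformation_norm[OF h(1)] by (simp add: norm_eq_sqrt_inner)
  have i: "\<forall>c\<in>b ` W. inner (h (a u)) c = inner (b u) c"
  proof
    fix c assume "c \<in> b ` W"
    then obtain w where w: "w \<in> W" "c = b w" by auto
    have "inner (h (a u)) c = inner (h (a u)) (h (a w))" using h w by simp
    also have "\<dots> = inner (a u) (a w)" using h(1) by (simp add: orthogonal_transformation_def)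
    also have "\<dots> = inner (b u) c" using insert.prems w by auto
    finally show "inner (h (a u)) c = inner (b u) c" .
  qed
  obtain r where r: "orthogonal_transformation r" "r (h (a u)) = b u" "\<forall>c\<in>b ` W. r c = c"
    using reflect_exists[OF n i] by blast
  show ?case
    using r h orthogonal_transformation_compose[OF r(1) h(1)] by (intro exI[of _ "r \<circ> h"] conjI) (simp_all del: o_apply, simp_all)
qed

lemma dist_eq_congruent:
  fixes p q :: "'v::finite \<Rightarrow> real^'n"
  assumes "\<forall>u w. dist (p u) (p w) = dist (q u) (q w)"
  shows "congruent p q"
proof -
  define v0 :: 'v where "v0 = undefined"
  define a where "a v = p v - p v0" for v
  define b where "b v = q v - q v0" for v
  have "inner (a u) (a w) = inner (b u) (b w)" for u w
  proof -
    have "inner (a u) (a w) = ((norm (a u))^2 + (norm (a w))^2 - (norm (a u - a w))^2) / 2"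
      by (simp add: dot_norm_neg)
    also have "\<dots> = ((norm (b u))^2 + (norm (b w))^2 - (norm (b u - b w))^2) / 2"
    proof -
      have e1: "a u - a w = p u - p w" "b u - b w = q u - q w" by (simp_all add: a_def b_def)
      have "norm (a x) = norm (b x)" for x using assms[rule_format, of x v0] by (simp add: a_def b_def dist_norm)
      moreover have "norm (a u - a w) = norm (b u - b w)" unfolding e1 using assms by (simp add: dist_norm)
      ultimately show ?thesis by simp
    qed
    also have "\<dots> = inner (b u) (b w)" by (simp add: dot_norm_neg)
    finally show ?thesis .
  qed
  then obtain h where h: "orthogonal_transformation h" "\<forall>w\<in>UNIV. h (a w) = b w"
    using gram_iso[of UNIV a b] by auto
  define f where "f z = h (z - p v0) + q v0" for z
  have "dist (f x) (f y) = dist x y" for x y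
  proof -
    have "f x - f y = h (x - y)" unfolding f_def using orthogonal_transformation_linear[OF h(1)]
      by (simp add: linear_diff)
    then show ?thesis by (simp add: dist_norm orthogonal_transformation_norm[OF h(1)])
  qed
  moreover have "q v = f (p v)" for v using h(2) by (simp add: f_def a_def b_def)
  ultimately show ?thesis unfolding congruent_def by blast
qed



definition ends :: "'v set \<Rightarrow> 'v \<times> 'v" where
  "ends e = (SOME uw. e = {fst uw, snd uw} \<and> fst uw \<noteq> snd uw)"

lemma ends: assumes "card e = 2"
  shows "e = {fst (ends e), snd (ends e)}" "fst (ends e) \<noteq> snd (ends e)"
proof -
  from assms obtain x y where "e = {x, y}" "x \<noteq> y" unfolding card_2_iff by blast
  then have "\<exists>uw. e = {fst uw, snd uw} \<and> fst uw \<noteq> snd uw" by (intro exI[of _ "(x,y)"]) auto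
  from someI_ex[OF this] show "e = {fst (ends e), snd (ends e)}" "fst (ends e) \<noteq> snd (ends e)"
    unfolding ends_def by auto
qed

definition rr :: "('v::finite \<Rightarrow> real^'n) \<Rightarrow> 'v set \<Rightarrow> real^('v \<times> 'n)" where
  "rr p e = rig_row p (fst (ends e)) (snd (ends e))"

lemma rig_row_swap: assumes "u \<noteq> w" shows "rig_row p w u = rig_row p u w"
proof -
  have "rig_row p w u $ k = rig_row p u w $ k" for k
    using assms unfolding rig_row_def by (cases "fst k = u"; cases "fst k = w") auto
  then show ?thesis by (simp add: vec_eq_iff)
qed

lemma span_rows:
  assumes "\<forall>e\<in>E. card e = 2"
  shows "span {rig_row p u w | u w. {u, w} \<in> E} = span (rr p ` E)"
proof (subst span_eq, intro conjI subsetI)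
  fix x assume "x \<in> {rig_row p u w | u w. {u, w} \<in> E}"
  then obtain u w where x: "x = rig_row p u w" "{u, w} \<in> E" by auto
  let ?e = "{u, w}"
  have c: "card ?e = 2" using assms x by auto
  note en = ends[OF c]
  obtain a b where ab: "ends ?e = (a, b)" by (cases "ends ?e")
  have "{u, w} = {a, b}" using en(1) by (simp only: ab fst_conv snd_conv)
  have "a \<noteq> b" using en(2) ab by simp
  have "a = u \<and> b = w \<or> a = w \<and> b = u" using \<open>{u, w} = {a, b}\<close> unfolding doubleton_eq_iff by blast
  then have "fst (ends ?e) = u \<and> snd (ends ?e) = w \<or> fst (ends ?e) = w \<and> snd (ends ?e) = u"
    by (simp only: ab fst_conv snd_conv)
  then show "x \<in> span (rr p ` E)"
  proof
    assume "fst (ends ?e) = u \<and> snd (ends ?e) = w"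
    then have "x = rr p ?e" by (simp add: rr_def x)
    then show ?thesis using x by (simp add: span_base)
  next
    assume h: "fst (ends ?e) = w \<and> snd (ends ?e) = u"
    then have "u \<noteq> w" using en by auto
    with h have "x = rr p ?e" by (simp add: rr_def x rig_row_swap)
    then show ?thesis using x by (simp add: span_base)
  qed
next
  fix x assume "x \<in> rr p ` E"
  then obtain e where e: "e \<in> E" "x = rr p e" by auto
  then have "card e = 2" using assms by auto
  from ends[OF this] e have "{fst (ends e), snd (ends e)} \<in> E" by simp
  then show "x \<in> span {rig_row p u w | u w. {u, w} \<in> E}"
    using e by (intro span_base) (auto simp: rr_def)
qed

lemma rank_rr: "\<forall>e\<in>E. card e = 2 \<Longrightarrow> rig_rank E p = dim (rr p ` E)"
  unfolding rig_rank_def by (simp add: span_rows dim_span)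

lemma dep_drop:
  fixes f :: "'e \<Rightarrow> 'a::euclidean_space"
  assumes "finite E" "dim (f ` E) < card E"
  shows "\<exists>e\<in>E. f e \<in> span (f ` (E - {e}))"
proof (cases "inj_on f E")
  case False
  then obtain e e' where "e \<in> E" "e' \<in> E" "e \<noteq> e'" "f e = f e'" unfolding inj_on_def by auto
  then show ?thesis by (intro bexI[of _ e]) (auto intro!: span_base)
next
  case True
  then have "card (f ` E) = card E" by (simp add: card_image)
  have "dependent (f ` E)"
  proof (rule ccontr)
    assume "\<not> dependent (f ` E)"
    then have "dim (f ` E) = card (f ` E)" by (intro dim_eq_card_independent) simp
    then show False using assms(2) \<open>card (f ` E) = card E\<close> by simp
  qed
  then obtain a where a: "a \<in> f ` E" "a \<in> span (f ` E - {a})" unfolding dependent_def by auto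
  then obtain e where e: "e \<in> E" "a = f e" by auto
  have "f ` E - {a} = f ` (E - {e})" using True e by (auto simp: inj_on_def)
  then show ?thesis using a e by auto
qed

lemma drop_span:
  assumes "e \<in> E" "f e \<in> span (f ` (E - {e}))"
  shows "span (f ` (E - {e})) = span (f ` E)"
proof -
  have "f ` E = insert (f e) (f ` (E - {e}))" using assms(1) by auto
  then show ?thesis using span_redundant[OF assms(2)] by simp
qed

lemma indep_coeffs:
  fixes f :: "'e \<Rightarrow> 'a::euclidean_space"
  assumes "finite E" "dim (f ` E) = card E" "(\<Sum>e\<in>E. c e *\<^sub>R f e) = 0" "e \<in> E"
  shows "c e = 0"
proof (rule ccontr)
  assume ne: "c e \<noteq> 0"
  have prev: "(\<Sum>e\<in>E. c e *\<^sub>R f e) = c e *\<^sub>R f e + (\<Sum>e'\<in>E - {e}. c e' *\<^sub>R f e')"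
    using assms(1,4) by (rule sum.remove)
  have eq: "c e *\<^sub>R f e = - (\<Sum>e'\<in>E - {e}. c e' *\<^sub>R f e')"
    using trans[OF sym[OF prev] assms(3)] by (rule eq_neg_iff_add_eq_0[THEN iffD2])
  have "f e = (1 / c e) *\<^sub>R (c e *\<^sub>R f e)" using ne by simp
  also have "\<dots> = (1 / c e) *\<^sub>R (- (\<Sum>e'\<in>E - {e}. c e' *\<^sub>R f e'))" by (simp only: eq)
  also have "\<dots> = - ((1 / c e) *\<^sub>R (\<Sum>e'\<in>E - {e}. c e' *\<^sub>R f e'))" by (rule scaleR_minus_right)
  also have "\<dots> \<in> span (f ` (E - {e}))"
    by (intro span_neg span_scale span_sum) (auto intro: span_base)
  finally have "span (f ` (E - {e})) = span (f ` E)" by (rule drop_span[OF assms(4)])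
  then have "dim (span (f ` E)) = dim (span (f ` (E - {e})))" by simp
  then have "dim (f ` E) = dim (f ` (E - {e}))" by (simp only: dim_span)
  also have "\<dots> \<le> card (f ` (E - {e}))" using assms(1) by (intro dim_le_card') auto
  also have "\<dots> \<le> card (E - {e})" using assms(1) by (intro card_image_le) auto
  also have "\<dots> < card E" using assms(1,4) by (rule card_Diff1_less)
  finally show False using assms(2) by simp
qed



definition flat :: "('v::finite \<Rightarrow> real^'n) \<Rightarrow> real^('v \<times> 'n)" where
  "flat p = (\<chi> k. p (fst k) $ snd k)"
definition unflat :: "real^('v::finite \<times> 'n::finite) \<Rightarrow> 'v \<Rightarrow> real^'n" where
  "unflat x v = (\<chi> j. x $ (v, j))"

lemma unflat_flat[simp]: "unflat (flat p) = p"
  by (auto simp: unflat_def flat_def vec_eq_iff)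
lemma flat_unflat[simp]: "flat (unflat x) = x"
  by (auto simp: unflat_def flat_def vec_eq_iff)

definition Dm :: "'v set \<Rightarrow> real^('v::finite \<times> 'n::finite) \<Rightarrow> real^'n" where
  "Dm e x = (\<chi> j. x $ (fst (ends e), j) - x $ (snd (ends e), j))"

lemma Dm_flat: "Dm e (flat p) = p (fst (ends e)) - p (snd (ends e))"
  by (auto simp: Dm_def flat_def vec_eq_iff)

lemma linear_Dm: "linear (Dm e)"
  by (intro linearI) (auto simp: Dm_def vec_eq_iff algebra_simps)

lemma bl_Dm_fst: "bounded_linear (\<lambda>x::(real^('v::finite \<times> 'n::finite)) \<times> (real^('v set)). Dm e (fst x))"
proof -
  have "linear (\<lambda>x::(real^('v::finite \<times> 'n::finite)) \<times> (real^('v set)). Dm e (fst x))"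
    by (intro linearI) (auto simp: Dm_def vec_eq_iff algebra_simps)
  then show ?thesis by (simp add: linear_conv_bounded_linear)
qed

lemma bl_snd_nth: "bounded_linear (\<lambda>x::(real^('v::finite \<times> 'n::finite)) \<times> (real^('v set)). snd x $ e)"
proof -
  have "linear (\<lambda>x::(real^('v::finite \<times> 'n::finite)) \<times> (real^('v set)). snd x $ e)"
    by (intro linearI) auto
  then show ?thesis by (simp add: linear_conv_bounded_linear)
qed

definition Fm :: "'v set set \<Rightarrow> (real^('v::finite \<times> 'n::finite)) \<times> (real^('v set)) \<Rightarrow> real^('v set)" where
  "Fm E xz = (\<chi> e. if e \<in> E then inner (Dm e (fst xz)) (Dm e (fst xz)) else snd xz $ e)"

definition Fd :: "'v set set \<Rightarrow> (real^('v::finite \<times> 'n::finite)) \<times> (real^('v set))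
     \<Rightarrow> (real^('v \<times> 'n)) \<times> (real^('v set)) \<Rightarrow> real^('v set)" where
  "Fd E xz hk = (\<chi> e. if e \<in> E then 2 * inner (Dm e (fst xz)) (Dm e (fst hk)) else snd hk $ e)"

lemma Fm_deriv: "(Fm E has_derivative Fd E xz) (at xz)"
proof -
  have "((\<lambda>x. Fm E x \<bullet> i) has_derivative (\<lambda>h. Fd E xz h \<bullet> i)) (at xz)" if iB: "i \<in> Basis" for i
  proof -
    obtain e where i: "i = axis e 1" using axis_inverse[OF iB] by blast
    show ?thesis
    proof (cases "e \<in> E")
      case True
      have d: "((\<lambda>x. Dm e (fst x)) has_derivative (\<lambda>h. Dm e (fst h))) (at xz)"
        by (rule bounded_linear_imp_has_derivative[OF bl_Dm_fst])
      have "((\<lambda>x. inner (Dm e (fst x)) (Dm e (fst x))) has_derivative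
             (\<lambda>h. inner (Dm e (fst xz)) (Dm e (fst h)) + inner (Dm e (fst h)) (Dm e (fst xz)))) (at xz)"
        by (rule has_derivative_inner[OF d d])
      then have "((\<lambda>x. inner (Dm e (fst x)) (Dm e (fst x))) has_derivative
             (\<lambda>h. 2 * inner (Dm e (fst xz)) (Dm e (fst h)))) (at xz)"
        by (simp add: inner_commute)
      then show ?thesis using True by (simp add: i inner_axis Fm_def Fd_def)
    next
      case False
      have "((\<lambda>x. snd x $ e) has_derivative (\<lambda>h. snd h $ e)) (at xz)"
        by (rule bounded_linear_imp_has_derivative[OF bl_snd_nth])
      then show ?thesis using False by (simp add: i inner_axis Fm_def Fd_def)
    qed
  qed
  then show ?thesis by (subst has_derivative_componentwise_within) auto
qed

lemma inner_rig_row: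
  assumes "u \<noteq> w"
  shows "inner (rig_row p u w) h = inner (p u - p w) (\<chi> j. h $ (u, j) - h $ (w, j))"
proof -
  let ?A = "\<lambda>j. (p u - p w) $ j"
  have "inner (rig_row p u w) h = (\<Sum>v\<in>UNIV. \<Sum>j\<in>UNIV. rig_row p u w $ (v, j) * h $ (v, j))"
    unfolding inner_vec_def inner_real_def sum.cartesian_product by (simp add: case_prod_unfold)
  also have "\<dots> = (\<Sum>v\<in>UNIV. (if v = u then (\<Sum>j\<in>UNIV. ?A j * h $ (u, j)) else 0)
                 + (if v = w then (\<Sum>j\<in>UNIV. - ?A j * h $ (w, j)) else 0))"
  proof (rule sum.cong[OF refl])
    fix v
    show "(\<Sum>j\<in>UNIV. rig_row p u w $ (v, j) * h $ (v, j)) =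
      (if v = u then (\<Sum>j\<in>UNIV. ?A j * h $ (u, j)) else 0) + (if v = w then (\<Sum>j\<in>UNIV. - ?A j * h $ (w, j)) else 0)"
      using assms by (cases "v = u"; cases "v = w") (auto simp: rig_row_def)
  qed
  also have "\<dots> = (\<Sum>j\<in>UNIV. ?A j * h $ (u, j)) + (\<Sum>j\<in>UNIV. - ?A j * h $ (w, j))"
    by (simp add: sum.distrib)
  also have "\<dots> = (\<Sum>j\<in>UNIV. ?A j * h $ (u, j) + - ?A j * h $ (w, j))"
    by (simp only: sum.distrib)
  also have "\<dots> = inner (p u - p w) (\<chi> j. h $ (u, j) - h $ (w, j))"
    unfolding inner_vec_def inner_real_def by (intro sum.cong) (auto simp: algebra_simps)
  finally show ?thesis .
qed

lemma inner_rr: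
  assumes "card e = 2"
  shows "inner (rr p e) h = inner (Dm e (flat p)) (Dm e h)"
proof -
  have "Dm e h = (\<chi> j. h $ (fst (ends e), j) - h $ (snd (ends e), j))" by (simp add: Dm_def)
  then show ?thesis using ends(2)[OF assms] by (simp add: rr_def inner_rig_row Dm_flat)
qed



lemma finite_E: "finite (E :: 'v::finite set set)"
  by simp

lemma Fd_surj:
  fixes p :: "'v::finite \<Rightarrow> real^'n::finite" and E :: "'v set set"
  assumes E2: "\<forall>e\<in>E. card e = 2" and dimE: "dim (rr p ` E) = card E"
  shows "surj (Fd E (flat p, z))"
proof -
  define L where "L h = (\<chi> e. if e \<in> E then inner (rr p e) h else 0)" for h :: "real^('v \<times> 'n)"
  have linL: "linear L"
    by (intro linearI) (auto simp: L_def vec_eq_iff inner_add_right)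
  define W where "W = {y::real^('v set). \<forall>e. e \<notin> E \<longrightarrow> y $ e = 0}"
  have sW: "subspace W" unfolding subspace_def W_def by auto
  have RW: "range L \<subseteq> W" by (auto simp: W_def L_def)
  have sR: "subspace (range L)" by (rule linear_subspace_image[OF linL subspace_UNIV])
  have WR: "W \<subseteq> range L"
  proof (rule ccontr)
    assume nWR: "\<not> W \<subseteq> range L"
    have ps: "span (range L) \<subset> span W"
      using RW nWR sR sW by (simp add: span_eq_iff[THEN iffD2] psubset_eq)
    obtain y0 where y0: "y0 \<noteq> 0" "y0 \<in> span W" "\<And>y. y \<in> span (range L) \<Longrightarrow> orthogonal y0 y"
      using orthogonal_to_subspace_exists_gen[OF ps] by blast
    have y0W: "y0 \<in> W" using y0(2) sW by (simp add: span_eq_iff[THEN iffD2])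
    define h0 where "h0 = (\<Sum>e\<in>E. (y0 $ e) *\<^sub>R rr p e)"
    have "inner y0 (L h0) = 0"
      using y0(3)[of "L h0"] by (simp add: span_base orthogonal_def)
    moreover have "inner y0 (L h0) = (\<Sum>e\<in>E. y0 $ e * inner (rr p e) h0)"
    proof -
      have "inner y0 (L h0) = (\<Sum>e\<in>UNIV. if e \<in> E then y0 $ e * inner (rr p e) h0 else 0)"
        unfolding inner_vec_def L_def by (intro sum.cong) auto
      also have "\<dots> = (\<Sum>e\<in>E. y0 $ e * inner (rr p e) h0)"
        by (subst sum.If_cases) (auto simp: Collect_mem_eq)
      finally show ?thesis .
    qed
    moreover have "(\<Sum>e\<in>E. y0 $ e * inner (rr p e) h0) = inner h0 h0"
      by (simp add: h0_def inner_sum_left)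
    ultimately have "h0 = 0" by simp
    then have "\<forall>e\<in>E. y0 $ e = 0"
      using indep_coeffs[OF finite_E dimE] unfolding h0_def by blast
    then have "y0 = 0" using y0W by (auto simp: W_def vec_eq_iff)
    then show False using y0(1) by simp
  qed
  show ?thesis
    unfolding surj_def
  proof
    fix y :: "real^('v set)"
    define y' where "y' = (\<chi> e. if e \<in> E then y $ e / 2 else 0)"
    have "y' \<in> W" by (simp add: W_def y'_def)
    then obtain h where h: "L h = y'" using WR by auto
    have "Fd E (flat p, z) (h, y) $ e = y $ e" for e
    proof (cases "e \<in> E")
      case True
      have "Fd E (flat p, z) (h, y) $ e = 2 * inner (rr p e) h"
        using True E2 by (simp add: Fd_def inner_rr)
      also have "\<dots> = 2 * (L h $ e)" using True by (simp add: L_def)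
      also have "\<dots> = y $ e" using True by (simp add: h y'_def)
      finally show ?thesis .
    qed (simp add: Fd_def)
    then have "y = Fd E (flat p, z) (h, y)" by (simp add: vec_eq_iff)
    then show "\<exists>x. y = Fd E (flat p, z) x" by blast
  qed
qed

lemma alg_indep_nonzero:
  assumes "alg_indep_Q x" shows "x k \<noteq> 0"
proof
  assume xk: "x k = 0"
  define \<delta> where "\<delta> = (\<lambda>i. if i = k then 1 else (0::nat))"
  define c :: "_ \<Rightarrow> rat" where "c = (\<lambda>\<alpha>. if \<alpha> = \<delta> then 1 else 0)"
  have supp: "{\<alpha>. c \<alpha> \<noteq> 0} = {\<delta>}" by (auto simp: c_def)
  have "(\<Prod>i\<in>UNIV. x i ^ \<delta> i) = (\<Prod>i\<in>UNIV. if i = k then x i else 1)"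
    by (intro prod.cong) (auto simp: \<delta>_def)
  also have "\<dots> = x k" by simp
  finally have "(\<Sum>\<alpha>\<in>{\<alpha>. c \<alpha> \<noteq> 0}. of_rat (c \<alpha>) * (\<Prod>i\<in>UNIV. x i ^ \<alpha> i)) = 0"
    using xk by (simp add: supp c_def)
  moreover have "finite {\<alpha>. c \<alpha> \<noteq> 0}" by (simp add: supp)
  ultimately have "c \<delta> = 0" using assms[unfolded alg_indep_Q_def, rule_format, of c \<delta>] by blast
  then show False by (simp add: c_def)
qed

lemma alg_indep_scale:
  assumes x: "alg_indep_Q x" and \<rho>: "\<forall>k. \<rho> k \<noteq> 0"
  shows "alg_indep_Q (\<lambda>k. of_rat (\<rho> k) * x k)"
  unfolding alg_indep_Q_def
proof (intro allI impI)
  fix c :: "('a \<Rightarrow> nat) \<Rightarrow> rat"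
  assume fin: "finite {\<alpha>. c \<alpha> \<noteq> 0}"
    and s0: "(\<Sum>\<alpha>\<in>{\<alpha>. c \<alpha> \<noteq> 0}. of_rat (c \<alpha>) * (\<Prod>i\<in>UNIV. (of_rat (\<rho> i) * x i) ^ \<alpha> i)) = 0"
  fix \<beta>
  define c' where "c' \<alpha> = c \<alpha> * (\<Prod>k\<in>UNIV. \<rho> k ^ \<alpha> k)" for \<alpha>
  have pnz: "(\<Prod>k\<in>UNIV. \<rho> k ^ \<alpha> k) \<noteq> 0" for \<alpha> using \<rho> by simp
  have supp: "{\<alpha>. c' \<alpha> \<noteq> 0} = {\<alpha>. c \<alpha> \<noteq> 0}" using pnz by (auto simp: c'_def)
  have "of_rat (c' \<alpha>) * (\<Prod>i\<in>UNIV. x i ^ \<alpha> i)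
        = of_rat (c \<alpha>) * (\<Prod>i\<in>UNIV. (of_rat (\<rho> i) * x i) ^ \<alpha> i)" for \<alpha>
    by (simp add: c'_def of_rat_mult of_rat_prod of_rat_power power_mult_distrib prod.distrib)
  then have "(\<Sum>\<alpha>\<in>{\<alpha>. c' \<alpha> \<noteq> 0}. of_rat (c' \<alpha>) * (\<Prod>i\<in>UNIV. x i ^ \<alpha> i)) = 0"
    using s0 by (simp add: supp)
  moreover have "finite {\<alpha>. c' \<alpha> \<noteq> 0}" using fin by (simp add: supp)
  ultimately have "c' \<beta> = 0" using x[unfolded alg_indep_Q_def, rule_format, of c' \<beta>] by blast
  then show "c \<beta> = 0" using pnz[of \<beta>] by (simp add: c'_def)
qed

lemma rat_approx:
  fixes x y :: real
  assumes "x \<noteq> 0" "0 < \<eta>"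
  shows "\<exists>r::rat. r \<noteq> 0 \<and> \<bar>of_rat r * x - y\<bar> < \<eta>"
proof -
  define a where "a = y / x"
  define \<delta> where "\<delta> = \<eta> / \<bar>x\<bar>"
  have \<delta>: "\<delta> > 0" using assms by (simp add: \<delta>_def)
  obtain s where s: "s \<in> \<rat>" "s \<noteq> 0" "\<bar>s - a\<bar> < \<delta>"
  proof (cases "a \<ge> 0")
    case True
    obtain s where "s \<in> \<rat>" "a < s" "s < a + \<delta>" using Rats_dense_in_real[of a "a + \<delta>"] \<delta> by auto
    then show ?thesis using True by (intro that[of s]) auto
  next
    case False
    obtain s where "s \<in> \<rat>" "a - \<delta> < s" "s < a" using Rats_dense_in_real[of "a - \<delta>" a] \<delta> by auto
    then show ?thesis using False by (intro that[of s]) auto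
  qed
  obtain r where r: "s = of_rat r" using s(1) Rats_cases by blast
  have "of_rat r * x - y = x * (s - a)"
    using assms(1) by (simp add: r a_def algebra_simps)
  then have "\<bar>of_rat r * x - y\<bar> = \<bar>x\<bar> * \<bar>s - a\<bar>"
    by (simp only: abs_mult)
  also have "\<dots> < \<bar>x\<bar> * \<delta>" using s(3) assms(1) by simp
  also have "\<dots> = \<eta>" using assms(1) by (simp add: \<delta>_def)
  finally have "\<bar>of_rat r * x - y\<bar> < \<eta>" .
  moreover have "r \<noteq> 0" using s(2) r by auto
  ultimately show ?thesis by blast
qed

lemma congruent_refl: "congruent p p"
  unfolding congruent_def by (intro exI[of _ id]) auto

lemma num_classes_ge:
  fixes q :: "'a \<Rightarrow> real^'b"
  assumes "\<forall>i\<in>{1..t}. equivalent E q (qs i)"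
    and "\<forall>i\<in>{1..t}. \<forall>j\<in>{1..t}. i \<noteq> j \<longrightarrow> \<not> congruent (qs i) (qs j)"
  shows "enat t \<le> num_classes E q"
proof -
  define R :: "(('a \<Rightarrow> real^'b) \<times> ('a \<Rightarrow> real^'b)) set" where "R = {(a, b). congruent a b}"
  define C where "C = {q'. equivalent E q q'} // R"
  define cl where "cl i = R `` {qs i}" for i
  have clC: "cl ` {1..t} \<subseteq> C" using assms(1) by (auto simp: C_def cl_def intro!: quotientI)
  have inj: "inj_on cl {1..t}"
  proof (rule inj_onI)
    fix i j assume ij: "i \<in> {1..t}" "j \<in> {1..t}" "cl i = cl j"
    have "qs j \<in> cl j" by (simp add: cl_def R_def congruent_refl)
    then have "qs j \<in> cl i" using ij(3) by simp
    then have "congruent (qs i) (qs j)" by (simp add: cl_def R_def)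
    then show "i = j" using assms(2) ij by blast
  qed
  show ?thesis
  proof (cases "finite C")
    case True
    have "t = card (cl ` {1..t})" using inj by (simp add: card_image)
    also have "\<dots> \<le> card C" using True clC by (rule card_mono)
    finally show ?thesis using True by (simp add: num_classes_def C_def R_def Let_def)
  next
    case False
    then show ?thesis by (simp add: num_classes_def C_def R_def Let_def)
  qed
qed

lemma r_d_ge: "generic (q :: 'v::finite \<Rightarrow> real^'n::finite) \<Longrightarrow> num_classes E q \<le> r_d E TYPE('n)"
  unfolding r_d_def by (rule SUP_upper) simp



lemma norm_unflat: "norm (unflat z v) \<le> norm z"
proof -
  have "norm (unflat z v) ^ 2 = (\<Sum>j\<in>UNIV. z $ (v, j) * z $ (v, j))"
    by (simp add: power2_norm_eq_inner inner_vec_def unflat_def)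
  also have "\<dots> = (\<Sum>k\<in>(\<lambda>j. (v, j)) ` UNIV. z $ k * z $ k)"
    by (subst sum.reindex) (auto simp: inj_on_def)
  also have "\<dots> \<le> (\<Sum>k\<in>UNIV. z $ k * z $ k)"
    by (rule sum_mono2) auto
  also have "\<dots> = norm z ^ 2" by (simp add: power2_norm_eq_inner inner_vec_def)
  finally show ?thesis by (rule power2_le_imp_le) simp
qed

lemma dist_unflat: "dist (unflat x v) (unflat y v) \<le> dist x y"
proof -
  have "unflat x v - unflat y v = unflat (x - y) v" by (simp add: unflat_def vec_eq_iff)
  then show ?thesis using norm_unflat[of "x - y" v] by (simp add: dist_norm)
qed

lemma abs_dist_diff: "\<bar>dist a b - dist c d\<bar> \<le> dist a c + dist b d"
proof -
  have "dist a b \<le> dist a c + dist c b" "dist c b \<le> dist c d + dist d b"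
       "dist c d \<le> dist c a + dist a d" "dist a d \<le> dist a b + dist b d"
    by (rule dist_triangle)+
  moreover have "dist c a = dist a c" "dist d b = dist b d" by (simp_all add: dist_commute)
  ultimately show ?thesis by linarith
qed

lemma finite_min_pos:
  fixes P :: "'s \<Rightarrow> real \<Rightarrow> bool"
  assumes "finite S" "\<forall>s\<in>S. \<exists>\<delta>>0. \<forall>\<delta>'. 0 < \<delta>' \<and> \<delta>' \<le> \<delta> \<longrightarrow> P s \<delta>'"
  shows "\<exists>\<delta>>0. \<forall>s\<in>S. \<forall>\<delta>'. 0 < \<delta>' \<and> \<delta>' \<le> \<delta> \<longrightarrow> P s \<delta>'"
  using assms
proof (induction S rule: finite_induct)
  case empty
  then show ?case by (intro exI[of _ "1::real"]) auto
next
  case (insert a S)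
  then obtain d1 where d1: "d1 > 0" "\<forall>s\<in>S. \<forall>\<delta>'. 0 < \<delta>' \<and> \<delta>' \<le> d1 \<longrightarrow> P s \<delta>'" by auto
  obtain d2 where d2: "(d2::real) > 0" "\<forall>\<delta>'. 0 < \<delta>' \<and> \<delta>' \<le> d2 \<longrightarrow> P a \<delta>'" using insert.prems by auto
  show ?case using d1 d2 by (intro exI[of _ "min d1 d2"]) auto
qed

lemma stays_noncongruent:
  fixes p q :: "'v::finite \<Rightarrow> real^'n::finite"
  assumes "\<not> congruent p q"
  shows "\<exists>\<delta>>0. \<forall>\<delta>'. 0 < \<delta>' \<and> \<delta>' \<le> \<delta> \<longrightarrow> (\<forall>x y. dist x (flat p) < \<delta>' \<longrightarrow> dist y (flat q) < \<delta>'
            \<longrightarrow> \<not> congruent (unflat x) (unflat y))"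
proof -
  obtain u w where uw: "dist (p u) (p w) \<noteq> dist (q u) (q w)"
    using assms dist_eq_congruent by blast
  define g where "g = \<bar>dist (p u) (p w) - dist (q u) (q w)\<bar>"
  have g: "g > 0" using uw by (simp add: g_def)
  have main: "\<not> congruent (unflat x) (unflat y)"
    if x: "dist x (flat p) < g / 4" and y: "dist y (flat q) < g / 4" for x y
  proof
    assume "congruent (unflat x) (unflat y)"
    then obtain f where f: "\<forall>a b. dist (f a) (f b) = dist a b" "\<forall>v. unflat y v = f (unflat x v)"
      unfolding congruent_def by blast
    have eq: "dist (unflat y u) (unflat y w) = dist (unflat x u) (unflat x w)" using f by simp
    have "dist (unflat x u) (p u) \<le> dist x (flat p)" "dist (unflat x w) (p w) \<le> dist x (flat p)"
      using dist_unflat[of x _ "flat p"] by simp_all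
    then have xu: "dist (unflat x u) (p u) < g / 4" "dist (unflat x w) (p w) < g / 4"
      using x by linarith+
    have "dist (unflat y u) (q u) \<le> dist y (flat q)" "dist (unflat y w) (q w) \<le> dist y (flat q)"
      using dist_unflat[of y _ "flat q"] by simp_all
    then have yu: "dist (unflat y u) (q u) < g / 4" "dist (unflat y w) (q w) < g / 4"
      using y by linarith+
    have "\<bar>dist (unflat x u) (unflat x w) - dist (p u) (p w)\<bar> \<le> dist (unflat x u) (p u) + dist (unflat x w) (p w)"
      by (rule abs_dist_diff)
    moreover have "\<bar>dist (unflat y u) (unflat y w) - dist (q u) (q w)\<bar> \<le> dist (unflat y u) (q u) + dist (unflat y w) (q w)"
      by (rule abs_dist_diff)
    ultimately have b: "dist (unflat x u) (unflat x w) - dist (p u) (p w) \<le> dist (unflat x u) (p u) + dist (unflat x w) (p w)"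
        "dist (p u) (p w) - dist (unflat x u) (unflat x w) \<le> dist (unflat x u) (p u) + dist (unflat x w) (p w)"
        "dist (unflat y u) (unflat y w) - dist (q u) (q w) \<le> dist (unflat y u) (q u) + dist (unflat y w) (q w)"
        "dist (q u) (q w) - dist (unflat y u) (unflat y w) \<le> dist (unflat y u) (q u) + dist (unflat y w) (q w)"
      unfolding abs_le_iff by auto
    have "g = dist (p u) (p w) - dist (q u) (q w) \<or> g = dist (q u) (q w) - dist (p u) (p w)"
      unfolding g_def by (simp add: abs_if)
    then show False using b xu yu eq g by linarith
  qed
  show ?thesis
  proof (intro exI[of _ "g / 4"] conjI allI impI)
    show "g / 4 > 0" using g by simp
    fix \<delta>' :: real and x y
    assume a: "0 < \<delta>' \<and> \<delta>' \<le> g / 4" "dist x (flat p) < \<delta>'" "dist y (flat q) < \<delta>'"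
    have "dist x (flat p) < g / 4" "dist y (flat q) < g / 4" using a by linarith+
    then show "\<not> congruent (unflat x) (unflat y)" by (rule main)
  qed
qed

lemma edge_norm:
  assumes "card e = 2" "e = {u, w}"
  shows "norm (P u - P w) = norm (P (fst (ends e)) - P (snd (ends e)))"
proof -
  obtain a b where ab: "ends e = (a, b)" by (cases "ends e")
  have "e = {a, b}" using ends(1)[OF assms(1)] unfolding ab fst_conv snd_conv .
  then have "{a, b} = {u, w}" using assms(2) by simp
  then have "a = u \<and> b = w \<or> a = w \<and> b = u" unfolding doubleton_eq_iff by blast
  then show ?thesis
  proof
    assume "a = u \<and> b = w" then show ?thesis by (simp add: ab)
  next
    assume "a = w \<and> b = u" then show ?thesis by (simp add: ab norm_minus_commute[of "P u"])
  qed
qed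

lemma Dm_unflat: "Dm e x = unflat x (fst (ends e)) - unflat x (snd (ends e))"
  by (simp add: Dm_def unflat_def vec_eq_iff)

lemma Fm_comp: "e \<in> E \<Longrightarrow> Fm E (x, z) $ e = norm (unflat x (fst (ends e)) - unflat x (snd (ends e))) ^ 2"
  by (simp add: Fm_def Dm_unflat power2_norm_eq_inner)

lemma Fm_same:
  assumes E2: "\<forall>e\<in>E. card e = 2" and eq: "equivalent E p q"
  shows "Fm E (flat p, z) = Fm E (flat q, z)"
proof -
  have "Fm E (flat p, z) $ e = Fm E (flat q, z) $ e" for e
  proof (cases "e \<in> E")
    case True
    have c: "card e = 2" using E2 True by blast
    have "{fst (ends e), snd (ends e)} = e" using ends(1)[OF c] by (rule sym)
    then have "{fst (ends e), snd (ends e)} \<in> E" using True by (simp only:)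
    then have "norm (p (fst (ends e)) - p (snd (ends e))) = norm (q (fst (ends e)) - q (snd (ends e)))"
      using eq unfolding equivalent_def by blast
    then show ?thesis using True by (simp add: Fm_comp)
  qed (simp add: Fm_def)
  then show ?thesis by (simp add: vec_eq_iff)
qed

lemma Fm_equiv:
  assumes E2: "\<forall>e\<in>E. card e = 2" and eq: "Fm E (x, z) = Fm E (y, z')"
  shows "equivalent E (unflat x) (unflat y)"
  unfolding equivalent_def
proof (intro allI impI)
  fix u w assume uw: "{u, w} \<in> E"
  let ?e = "{u, w}"
  have c: "card ?e = 2" using uw E2 by blast
  have "Fm E (x, z) $ ?e = Fm E (y, z') $ ?e" using eq by simp
  then have "norm (unflat x (fst (ends ?e)) - unflat x (snd (ends ?e))) ^ 2 =
             norm (unflat y (fst (ends ?e)) - unflat y (snd (ends ?e))) ^ 2"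
    using uw by (simp add: Fm_comp)
  then have "norm (unflat x (fst (ends ?e)) - unflat x (snd (ends ?e))) =
             norm (unflat y (fst (ends ?e)) - unflat y (snd (ends ?e)))"
    by (simp add: power2_eq_iff_nonneg)
  then show "norm (unflat x u - unflat x w) = norm (unflat y u - unflat y w)"
    using edge_norm[OF c refl, of "unflat x"] edge_norm[OF c refl, of "unflat y"] by simp
qed

lemma Fm_cont: "continuous_on UNIV (Fm E)"
  by (rule has_derivative_continuous_on[of UNIV "Fm E" "Fd E"]) (simp add: Fm_deriv)

lemma open_at:
  fixes p :: "'v::finite \<Rightarrow> real^'n::finite"
  assumes E2: "\<forall>e\<in>E. card e = 2" and dimE: "dim (rr p ` E) = card E" and d: "\<delta> > 0"
  shows "\<exists>\<epsilon>>0. ball (Fm E (flat p, 0)) \<epsilon> \<subseteq> Fm E ` ball (flat p, 0) \<delta>"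
proof -
  let ?x = "(flat p, 0 :: real^('v set))"
  have der: "(Fm E has_derivative Fd E ?x) (at ?x)" by (rule Fm_deriv)
  then have "linear (Fd E ?x)" using has_derivative_linear by blast
  moreover have "surj (Fd E ?x)" by (rule Fd_surj[OF E2 dimE])
  ultimately obtain g where g: "linear g" "Fd E ?x \<circ> g = id"
    using real_vector.linear_surjective_right_inverse by blast
  have "Fm E ?x \<in> interior (Fm E ` ball ?x \<delta>)"
    by (rule sussmann_open_mapping[OF open_UNIV Fm_cont UNIV_I der _ g(2)])
       (use g(1) d in \<open>auto simp: linear_conv_bounded_linear\<close>)
  then show ?thesis unfolding mem_interior by blast
qed



theorem lemma4p12:
  fixes E :: "'v::finite set set"
    and vs :: "'n::finite \<Rightarrow> 'v"
    and ps :: "nat \<Rightarrow> 'v \<Rightarrow> real^'n"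
    and t :: nat
  assumes "simple_graph E"
    and "min_d_rigid E TYPE('n)"
    and "\<forall>i\<in>{1..t}. inf_rigid E (ps i)"
    and "\<forall>i\<in>{1..t}. \<forall>j\<in>{1..t}. equivalent E (ps i) (ps j)"
    and "\<forall>i\<in>{1..t}. \<forall>j\<in>{1..t}. i \<noteq> j \<longrightarrow> \<not> congruent (ps i) (ps j)"
    and "\<forall>i\<in>{1..t}. aff_indep_points (\<lambda>k. ps i (vs k))"
  shows "enat t \<le> r_d E TYPE('n)"
proof -
  have E2: "\<forall>e\<in>E. card e = 2" using assms(1) unfolding simple_graph_def .
  obtain p0 :: "'v \<Rightarrow> real^'n" where p0: "generic p0" "inf_rigid E p0"
    using assms(2) unfolding min_d_rigid_def d_rigid_def by blast
  have nr: "\<forall>e\<in>E. \<not> d_rigid (E - {e}) TYPE('n)"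
    using assms(2) unfolding min_d_rigid_def by blast
  show ?thesis
  proof (cases "t \<le> 1")
    case True
    have "enat 1 \<le> num_classes E p0"
      by (rule num_classes_ge[where qs = "\<lambda>_. p0"]) (auto simp: equivalent_def)
    also have "\<dots> \<le> r_d E TYPE('n)" by (rule r_d_ge[OF p0(1)])
    finally have r1: "enat 1 \<le> r_d E TYPE('n)" .
    have "enat t \<le> enat 1" using True by simp
    then show ?thesis using r1 by (rule order_trans)
  next
    case False
    then have t2: "1 \<in> {1..t}" "2 \<in> {1..t}" by auto
    have nc: "\<not> complete_graph E"
    proof
      assume cE: "complete_graph E"
      have "dist (ps 1 u) (ps 1 w) = dist (ps 2 u) (ps 2 w)" for u w
      proof (cases "u = w")
        case False
        then have "card {u, w} = 2" by simp
        then have "{u, w} \<in> E" using cE unfolding complete_graph_def by simp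
        then show ?thesis using assms(4) t2 unfolding equivalent_def by (simp add: dist_norm)
      qed simp
      then have "congruent (ps 1) (ps 2)" by (intro dist_eq_congruent) blast
      then show False using assms(5) t2 by auto
    qed
    have rk: "int (rig_rank E p) = int (CARD('n) * CARD('v)) - int ((CARD('n) + 1) choose 2)"
      if "inf_rigid E p" for p :: "'v \<Rightarrow> real^'n"
      using that nc unfolding inf_rigid_def by blast
    have cardE: "dim (rr p0 ` E) = card E"
    proof (rule ccontr)
      assume ne: "dim (rr p0 ` E) \<noteq> card E"
      have "dim (rr p0 ` E) \<le> card (rr p0 ` E)" by (rule dim_le_card') simp
      also have "\<dots> \<le> card E" by (rule card_image_le) simp
      finally have "dim (rr p0 ` E) < card E" using ne by simp
      then obtain e where e: "e \<in> E" "rr p0 e \<in> span (rr p0 ` (E - {e}))"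
        using dep_drop[OF finite_E] by blast
      have E2': "\<forall>e'\<in>E - {e}. card e' = 2" using E2 by blast
      have "dim (rr p0 ` (E - {e})) = dim (span (rr p0 ` (E - {e})))" by (simp add: dim_span)
      also have "\<dots> = dim (span (rr p0 ` E))" using drop_span[OF e] by simp
      also have "\<dots> = dim (rr p0 ` E)" by (simp add: dim_span)
      finally have dd: "dim (rr p0 ` (E - {e})) = dim (rr p0 ` E)" .
      have "rig_rank (E - {e}) p0 = rig_rank E p0"
        unfolding rank_rr[OF E2'] rank_rr[OF E2] by (rule dd)
      then have "inf_rigid (E - {e}) p0" using rk[OF p0(2)] unfolding inf_rigid_def by simp
      then have "d_rigid (E - {e}) TYPE('n)" unfolding d_rigid_def using p0(1) by blast
      then show False using nr e(1) by blast
    qed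
    have dimi: "dim (rr (ps i) ` E) = card E" if "i \<in> {1..t}" for i
    proof -
      have "int (rig_rank E (ps i)) = int (rig_rank E p0)" using rk[OF p0(2)] rk assms(3) that by simp
      then have "rig_rank E (ps i) = rig_rank E p0" by simp
      then show ?thesis using cardE unfolding rank_rr[OF E2] by simp
    qed
    have "\<exists>\<delta>>0. \<forall>s\<in>{(i, j). i \<in> {1..t} \<and> j \<in> {1..t} \<and> i \<noteq> j}. \<forall>\<delta>'. 0 < \<delta>' \<and> \<delta>' \<le> \<delta> \<longrightarrow>
        (\<forall>x y. dist x (flat (ps (fst s))) < \<delta>' \<longrightarrow> dist y (flat (ps (snd s))) < \<delta>'
            \<longrightarrow> \<not> congruent (unflat x) (unflat y))"
    proof (rule finite_min_pos)
      show "finite {(i, j). i \<in> {1..t} \<and> j \<in> {1..t} \<and> i \<noteq> j}"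
        by (rule finite_subset[of _ "{1..t} \<times> {1..t}"]) auto
      show "\<forall>s\<in>{(i, j). i \<in> {1..t} \<and> j \<in> {1..t} \<and> i \<noteq> j}. \<exists>\<delta>>0. \<forall>\<delta>'. 0 < \<delta>' \<and> \<delta>' \<le> \<delta> \<longrightarrow>
        (\<forall>x y. dist x (flat (ps (fst s))) < \<delta>' \<longrightarrow> dist y (flat (ps (snd s))) < \<delta>'
            \<longrightarrow> \<not> congruent (unflat x) (unflat y))"
      proof
        fix s assume "s \<in> {(i, j). i \<in> {1..t} \<and> j \<in> {1..t} \<and> i \<noteq> j}"
        then have "\<not> congruent (ps (fst s)) (ps (snd s))" using assms(5) by auto
        then show "\<exists>\<delta>>0. \<forall>\<delta>'. 0 < \<delta>' \<and> \<delta>' \<le> \<delta> \<longrightarrow>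
          (\<forall>x y. dist x (flat (ps (fst s))) < \<delta>' \<longrightarrow> dist y (flat (ps (snd s))) < \<delta>'
            \<longrightarrow> \<not> congruent (unflat x) (unflat y))" by (rule stays_noncongruent)
      qed
    qed
    then obtain \<delta> where \<delta>: "\<delta> > 0"
      and \<delta>nc: "\<And>i j x y. i \<in> {1..t} \<Longrightarrow> j \<in> {1..t} \<Longrightarrow> i \<noteq> j \<Longrightarrow> dist x (flat (ps i)) < \<delta>
         \<Longrightarrow> dist y (flat (ps j)) < \<delta> \<Longrightarrow> \<not> congruent (unflat x) (unflat y)"
      by (auto 0 0) (metis (no_types, lifting) case_prod_conv fst_conv snd_conv order_refl mem_Collect_eq)
    define X where "X i = (flat (ps i), 0 :: real^('v set))" for i
    define Y0 where "Y0 = Fm E (X 1)"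
    have FX: "Fm E (X i) = Y0" if "i \<in> {1..t}" for i
    proof -
      have "equivalent E (ps i) (ps 1)" using assms(4) that t2 by blast
      then show ?thesis unfolding X_def Y0_def by (rule Fm_same[OF E2])
    qed
    have "\<exists>\<epsilon>>0. \<forall>i\<in>{1..t}. \<forall>\<epsilon>'. 0 < \<epsilon>' \<and> \<epsilon>' \<le> \<epsilon> \<longrightarrow> ball Y0 \<epsilon>' \<subseteq> Fm E ` ball (X i) \<delta>"
    proof (rule finite_min_pos)
      show "finite {1..t}" by simp
      show "\<forall>i\<in>{1..t}. \<exists>\<epsilon>>0. \<forall>\<epsilon>'. 0 < \<epsilon>' \<and> \<epsilon>' \<le> \<epsilon> \<longrightarrow> ball Y0 \<epsilon>' \<subseteq> Fm E ` ball (X i) \<delta>"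
      proof
        fix i assume i: "i \<in> {1..t}"
        obtain \<epsilon> where \<epsilon>: "\<epsilon> > 0" "ball (Fm E (flat (ps i), 0)) \<epsilon> \<subseteq> Fm E ` ball (flat (ps i), 0) \<delta>"
          using open_at[OF E2 dimi[OF i] \<delta>] by blast
        have "ball Y0 \<epsilon>' \<subseteq> Fm E ` ball (X i) \<delta>" if "0 < \<epsilon>' \<and> \<epsilon>' \<le> \<epsilon>" for \<epsilon>'
        proof -
          have "ball Y0 \<epsilon>' \<subseteq> ball Y0 \<epsilon>" using that by auto
          also have "\<dots> \<subseteq> Fm E ` ball (X i) \<delta>" using \<epsilon>(2) FX[OF i] by (simp add: X_def)
          finally show ?thesis .
        qed
        then show "\<exists>\<epsilon>>0. \<forall>\<epsilon>'. 0 < \<epsilon>' \<and> \<epsilon>' \<le> \<epsilon> \<longrightarrow> ball Y0 \<epsilon>' \<subseteq> Fm E ` ball (X i) \<delta>"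
          using \<epsilon>(1) by blast
      qed
    qed
    then obtain \<epsilon> where \<epsilon>: "\<epsilon> > 0" "\<And>i. i \<in> {1..t} \<Longrightarrow> ball Y0 \<epsilon> \<subseteq> Fm E ` ball (X i) \<delta>"
      by (meson order_refl)
    obtain \<eta> where \<eta>: "\<eta> > 0" "\<And>x'. dist x' (X 1) < \<eta> \<Longrightarrow> dist (Fm E x') (Fm E (X 1)) < \<epsilon>"
      using Fm_cont[of E] \<epsilon>(1) unfolding continuous_on_iff by (meson UNIV_I)
    define g0 where "g0 = (\<lambda>k::'v \<times> 'n. flat p0 $ k)"
    have g0eq: "(\<lambda>(v, j). p0 v $ j) = g0" by (auto simp: g0_def flat_def)
    have ai: "alg_indep_Q g0" using p0(1) unfolding generic_def g0eq .
    define N where "N = real CARD('v \<times> 'n)"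
    have N: "N > 0" by (simp add: N_def)
    have "\<forall>k. \<exists>r. r \<noteq> 0 \<and> \<bar>of_rat r * g0 k - flat (ps 1) $ k\<bar> < \<eta> / N"
    proof
      fix k show "\<exists>r. r \<noteq> 0 \<and> \<bar>of_rat r * g0 k - flat (ps 1) $ k\<bar> < \<eta> / N"
        by (rule rat_approx[OF alg_indep_nonzero[OF ai]]) (use \<eta>(1) N in simp)
    qed
    then obtain \<rho> where \<rho>: "\<And>k. \<rho> k \<noteq> 0" "\<And>k. \<bar>of_rat (\<rho> k) * g0 k - flat (ps 1) $ k\<bar> < \<eta> / N"
      by metis
    define xq where "xq = (\<chi> k. of_rat (\<rho> k) * g0 k)"
    define q where "q = unflat xq"
    have gq: "generic q"
    proof -
      have "(\<lambda>(v, j). q v $ j) = (\<lambda>k. of_rat (\<rho> k) * g0 k)"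
        by (auto simp: q_def unflat_def xq_def)
      then show ?thesis unfolding generic_def using alg_indep_scale[OF ai] \<rho>(1) by simp
    qed
    have "dist xq (flat (ps 1)) \<le> (\<Sum>k\<in>UNIV. \<bar>(xq - flat (ps 1)) $ k\<bar>)"
      unfolding dist_norm by (rule norm_le_l1_cart)
    also have "\<dots> < of_nat (card (UNIV :: ('v \<times> 'n) set)) * (\<eta> / N)"
      by (rule sum_bounded_above_strict) (use \<rho>(2) in \<open>auto simp: xq_def\<close>)
    also have "\<dots> = \<eta>" using N by (simp add: N_def)
    finally have dxq: "dist xq (flat (ps 1)) < \<eta>" .
    have "dist (xq, 0 :: real^('v set)) (X 1) = dist xq (flat (ps 1))"
      by (simp add: X_def dist_Pair_Pair)
    then have "dist (Fm E (xq, 0)) Y0 < \<epsilon>" using \<eta>(2) dxq by (simp add: Y0_def)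
    then have inball: "Fm E (xq, 0) \<in> ball Y0 \<epsilon>" by (simp add: dist_commute)
    have "\<forall>i\<in>{1..t}. \<exists>xz. xz \<in> ball (X i) \<delta> \<and> Fm E xz = Fm E (xq, 0)"
    proof
      fix i assume i: "i \<in> {1..t}"
      then have "Fm E (xq, 0) \<in> Fm E ` ball (X i) \<delta>" using \<epsilon>(2) inball by blast
      then show "\<exists>xz. xz \<in> ball (X i) \<delta> \<and> Fm E xz = Fm E (xq, 0)" by force
    qed
    then obtain XZ where XZ: "\<And>i. i \<in> {1..t} \<Longrightarrow> XZ i \<in> ball (X i) \<delta>"
      "\<And>i. i \<in> {1..t} \<Longrightarrow> Fm E (XZ i) = Fm E (xq, 0)"
      by metis
    define qs where "qs i = unflat (fst (XZ i))" for i
    have eqv: "\<forall>i\<in>{1..t}. equivalent E q (qs i)"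
    proof
      fix i assume i: "i \<in> {1..t}"
      have "Fm E (xq, 0) = Fm E (fst (XZ i), snd (XZ i))" using XZ(2)[OF i] by simp
      then show "equivalent E q (qs i)" unfolding q_def qs_def by (rule Fm_equiv[OF E2])
    qed
    have close: "dist (fst (XZ i)) (flat (ps i)) < \<delta>" if i: "i \<in> {1..t}" for i
    proof -
      have "dist (fst (XZ i)) (flat (ps i)) \<le> dist (XZ i) (X i)"
        using dist_fst_le[of "XZ i" "X i"] by (simp add: X_def)
      also have "\<dots> < \<delta>" using XZ(1)[OF i] by (simp add: dist_commute)
      finally show ?thesis .
    qed
    have ncg: "\<forall>i\<in>{1..t}. \<forall>j\<in>{1..t}. i \<noteq> j \<longrightarrow> \<not> congruent (qs i) (qs j)"
      unfolding qs_def using \<delta>nc close by blast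
    have "enat t \<le> num_classes E q" by (rule num_classes_ge[OF eqv ncg])
    also have "\<dots> \<le> r_d E TYPE('n)" by (rule r_d_ge[OF gq])
    finally show ?thesis .
  qed
qed


end
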